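(* Let $m,d,h$ be natural numbers with $d\geqslant h\geqslant m+2$, and let $c,C$ be positive constants. Let $\Xi:\mathbb{R}^h\to\mathbb{R}^d$ be a linear map and $L:\mathbb{R}^h\to\mathbb{R}^m$ a surjective linear map, with $\Vert\Xi\Vert_\infty\leqslant C$ and $\operatorname{dist}((\Xi,L),V^*_{\mathrm{degen},2}(m,d,h))\geqslant c$. Let $K=\ker L$, choose any orthonormal basis $\{\mathbf v^{(1)},\dots,\mathbf v^{(h-m)}\}$ of $K$, and let $\Phi:\mathbb{R}^{h-m}\to K$ be $\Phi(\mathbf x)=\sum_{i=1}^{h-m}x_i\mathbf v^{(i)}$. Then $\Vert\Xi\Phi\Vert_\infty=O(C)$ and $\operatorname{dist}(\Xi\Phi,V_{\mathrm{degen}}(h-m,d))=\Omega(c)$.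
   Context: Matrices identified with linear maps; $\Vert\cdot\Vert_\infty$ max absolute entry; $\operatorname{dist}$ is $\ell^\infty$ distance on entries. $V^*_{\mathrm{degen},2}(m,d,h)$: pairs $(\Xi,L)$ with $\Xi:\mathbb{R}^h\to\mathbb{R}^d$, $L:\mathbb{R}^h\to\mathbb{R}^m$ linear, such that for some $i,j\leqslant d$ and $\lambda\in\mathbb{R}$, $\mathbf e_i^*-\lambda\mathbf e_j^*\neq0$ and $\Xi^*(\mathbf e_i^*-\lambda\mathbf e_j^* )\in L^*((\mathbb{R}^m)^* )$ ($\mathbf e_i^*$ the standard dual basis of $(\mathbb{R}^d)^*$, $\Xi^*\varphi=\varphi\circ\Xi$). $\operatorname{dist}((\Xi,L),V^*_{\mathrm{degen},2}(m,d,h))\geqslant c$ means $(\Xi+Q,L)\notin V^*_{\mathrm{degen},2}(m,d,h)$ for all linear $Q:\mathbb{R}^h\to\mathbb{R}^d$ with $\Vert Q\Vert_\infty<c$. $V_{\mathrm{degen}}(n,d)$ is the set of linear maps $\Psi=(\psi_1,\dots,\psi_d):\mathbb{R}^n\to\mathbb{R}^d$ (systems of linear forms) such that for some $i$, every partition $\mathcal P_i$ of $[d]\setminus\{i\}$ has a part $\mathcal C$ with $\psi_i\in\mathrm{span}(\psi_j:j\in\mathcal C)$; equivalently, for some $i\neq j$, $\psi_i$ is a real multiple of $\psi_j$. Implied constants depend only on $m,d,h$. *)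

theory Defs
  imports Complex_Main "HOL-Library.Disjoint_Sets"
begin

text \<open>Matrices are represented as functions nat => nat => real; a (p x q)-matrix M
  (a linear map from R^q to R^p) only uses the entries M i k with i < p, k < q.
  Vectors in R^n are functions nat => real using only indices below n.\<close>

definition mnorm :: "nat \<Rightarrow> nat \<Rightarrow> (nat \<Rightarrow> nat \<Rightarrow> real) \<Rightarrow> real" where
  "mnorm p q M = Max (insert 0 {\<bar>M i k\<bar> | i k. i < p \<and> k < q})"

definition matmul :: "nat \<Rightarrow> (nat \<Rightarrow> nat \<Rightarrow> real) \<Rightarrow> (nat \<Rightarrow> nat \<Rightarrow> real) \<Rightarrow> nat \<Rightarrow> nat \<Rightarrow> real" where
  "matmul q A B = (\<lambda>i r. \<Sum>k<q. A i k * B k r)"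

definition surj_mat :: "nat \<Rightarrow> nat \<Rightarrow> (nat \<Rightarrow> nat \<Rightarrow> real) \<Rightarrow> bool" where
  "surj_mat p q L \<longleftrightarrow> (\<forall>y::nat \<Rightarrow> real. \<exists>x::nat \<Rightarrow> real. \<forall>i<p. (\<Sum>k<q. L i k * x k) = y i)"

text \<open>V*_degen,2(m,d,h): Xi is d x h, L is m x h. For some i,j < d and lambda,
  e_i^* - lambda e_j^* is nonzero and Xi^*(e_i^* - lambda e_j^*) = L^* phi for some phi in (R^m)^*.\<close>
definition Vstar_degen2 :: "nat \<Rightarrow> nat \<Rightarrow> nat \<Rightarrow> (nat \<Rightarrow> nat \<Rightarrow> real) \<Rightarrow> (nat \<Rightarrow> nat \<Rightarrow> real) \<Rightarrow> bool" where
  "Vstar_degen2 m d h Xi L \<longleftrightarrow>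
     (\<exists>i<d. \<exists>j<d. \<exists>lam::real.
        (\<exists>t<d. (if t = i then 1 else 0) - lam * (if t = j then 1 else 0) \<noteq> 0) \<and>
        (\<exists>\<phi>::nat \<Rightarrow> real. \<forall>k<h. Xi i k - lam * Xi j k = (\<Sum>l<m. \<phi> l * L l k)))"

definition dist_Vstar_ge :: "nat \<Rightarrow> nat \<Rightarrow> nat \<Rightarrow> (nat \<Rightarrow> nat \<Rightarrow> real) \<Rightarrow> (nat \<Rightarrow> nat \<Rightarrow> real) \<Rightarrow> real \<Rightarrow> bool" where
  "dist_Vstar_ge m d h Xi L c \<longleftrightarrow>
     (\<forall>Q. mnorm d h Q < c \<longrightarrow> \<not> Vstar_degen2 m d h (\<lambda>i k. Xi i k + Q i k) L)"

text \<open>V_degen(n,d): Psi is d x n with rows psi_1..psi_d (linear forms on R^n).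
  For some i, every partition of [d] minus {i} has a part C with psi_i in span(psi_j : j in C).\<close>
definition in_span :: "nat \<Rightarrow> (nat \<Rightarrow> nat \<Rightarrow> real) \<Rightarrow> nat set \<Rightarrow> nat \<Rightarrow> bool" where
  "in_span n Psi C i \<longleftrightarrow> (\<exists>a::nat \<Rightarrow> real. \<forall>k<n. Psi i k = (\<Sum>j\<in>C. a j * Psi j k))"

definition V_degen :: "nat \<Rightarrow> nat \<Rightarrow> (nat \<Rightarrow> nat \<Rightarrow> real) \<Rightarrow> bool" where
  "V_degen n d Psi \<longleftrightarrow>
     (\<exists>i<d. \<forall>P. partition_on ({..<d} - {i}) P \<longrightarrow> (\<exists>C\<in>P. in_span n Psi C i))"

definition dist_Vdegen_ge :: "nat \<Rightarrow> nat \<Rightarrow> (nat \<Rightarrow> nat \<Rightarrow> real) \<Rightarrow> real \<Rightarrow> bool" where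
  "dist_Vdegen_ge n d Psi c \<longleftrightarrow>
     (\<forall>Q. mnorm d n Q < c \<longrightarrow> \<not> V_degen n d (\<lambda>i k. Psi i k + Q i k))"

definition orthonormal_kernel_basis :: "nat \<Rightarrow> nat \<Rightarrow> (nat \<Rightarrow> nat \<Rightarrow> real) \<Rightarrow> (nat \<Rightarrow> nat \<Rightarrow> real) \<Rightarrow> bool" where
  "orthonormal_kernel_basis m h L v \<longleftrightarrow>
     (\<forall>r<h-m. \<forall>s<h-m. (\<Sum>k<h. v r k * v s k) = (if r = s then 1 else 0)) \<and>
     (\<forall>r<h-m. \<forall>i<m. (\<Sum>k<h. L i k * v r k) = 0) \<and>
     (\<forall>x::nat \<Rightarrow> real. (\<forall>i<m. (\<Sum>k<h. L i k * x k) = 0) \<longrightarrow>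
        (\<exists>a::nat \<Rightarrow> real. \<forall>k<h. x k = (\<Sum>r<h-m. a r * v r k)))"

text \<open>Phi : R^(h-m) -> K, Phi x = sum_r x_r v_r, as an h x (h-m) matrix.\<close>
definition Phi_mat :: "(nat \<Rightarrow> nat \<Rightarrow> real) \<Rightarrow> nat \<Rightarrow> nat \<Rightarrow> real" where
  "Phi_mat v = (\<lambda>k r. v r k)"

end

theory Submission
  imports Defs
begin

lemma mnorm_fin: fixes p q :: nat shows "finite {\<bar>M i k\<bar> | i k. i < p \<and> k < q}"
proof -
  have "{\<bar>M i k\<bar> | i k. i < p \<and> k < q} = (\<lambda>(i,k). \<bar>M i k\<bar>) ` ({..<p} \<times> {..<q})" by auto
  moreover have "finite ((\<lambda>(i,k). \<bar>M i k\<bar>) ` ({..<p} \<times> {..<q}))"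
    by (intro finite_imageI finite_cartesian_product) simp_all
  ultimately show ?thesis by simp
qed

lemma mnorm_ge: "i < p \<Longrightarrow> k < q \<Longrightarrow> \<bar>M i k\<bar> \<le> mnorm p q M"
  unfolding mnorm_def by (rule Max_ge) (use mnorm_fin in auto)

lemma mnorm_nonneg: "0 \<le> mnorm p q M"
  unfolding mnorm_def by (rule Max_ge) (use mnorm_fin in auto)

lemma mnorm_le: "0 \<le> B \<Longrightarrow> (\<forall>i<p. \<forall>k<q. \<bar>M i k\<bar> \<le> B) \<Longrightarrow> mnorm p q M \<le> B"
  unfolding mnorm_def using mnorm_fin[of M p q] by (subst Max_le_iff) auto

lemma V_degen_pair:
  assumes "V_degen n d Psi"
  shows "\<exists>i<d. \<exists>j<d. i \<noteq> j \<and> (\<exists>a. \<forall>k<n. Psi i k = a * Psi j k)"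
proof -
  obtain i where i: "i < d" and H: "\<forall>P. partition_on ({..<d} - {i}) P \<longrightarrow> (\<exists>C\<in>P. in_span n Psi C i)"
    using assms unfolding V_degen_def by blast
  let ?S = "{..<d} - {i}"
  have "partition_on ?S ((\<lambda>j. {j}) ` ?S)"
    unfolding partition_on_def disjoint_def by auto
  then obtain C where "C \<in> (\<lambda>j. {j}) ` ?S" "in_span n Psi C i" using H by blast
  then obtain j where j: "j \<in> ?S" and "in_span n Psi {j} i" by blast
  then obtain a where "\<forall>k<n. Psi i k = a j * Psi j k" unfolding in_span_def by auto
  with i j show ?thesis by blast
qed

lemma rowspace:
  fixes L X v :: "nat \<Rightarrow> nat \<Rightarrow> real" and w :: "nat \<Rightarrow> real"
  assumes sX: "\<forall>l<m. \<forall>i<m. (\<Sum>t<h. L i t * X l t) = (if i = l then 1 else 0)"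
  and ker: "\<forall>x::nat \<Rightarrow> real. (\<forall>i<m. (\<Sum>k<h. L i k * x k) = 0) \<longrightarrow>
        (\<exists>a::nat \<Rightarrow> real. \<forall>k<h. x k = (\<Sum>r<n. a r * v r k))"
  and orth: "\<forall>r<n. (\<Sum>t<h. w t * v r t) = 0"
  and k: "k < h"
  shows "w k = (\<Sum>l<m. (\<Sum>t<h. w t * X l t) * L l k)"
proof -
  define u where "u t = (if t = k then 1 else 0) - (\<Sum>l<m. X l t * L l k)" for t
  have Lu: "\<forall>i<m. (\<Sum>t<h. L i t * u t) = 0"
  proof (intro allI impI)
    fix i assume i: "i < m"
    have e1: "(\<Sum>t<h. L i t * (if t = k then 1 else 0)) = L i k"
      using k by (simp add: if_distrib cong: if_cong)
    have "(\<Sum>t<h. L i t * (\<Sum>l<m. X l t * L l k)) = (\<Sum>l<m. L l k * (\<Sum>t<h. L i t * X l t))"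
      by (simp add: sum_distrib_left sum_distrib_right sum.swap[of _ "{..<h}"] algebra_simps)
    also have "\<dots> = (\<Sum>l<m. L l k * (if i = l then 1 else 0))"
      using sX i by (intro sum.cong refl) (simp add: mult.commute)
    also have "\<dots> = L i k" using i by (simp add: if_distrib cong: if_cong)
    finally have e2: "(\<Sum>t<h. L i t * (\<Sum>l<m. X l t * L l k)) = L i k" .
    show "(\<Sum>t<h. L i t * u t) = 0"
      unfolding u_def by (simp add: right_diff_distrib sum_subtractf e1 e2)
  qed
  then obtain a where a: "\<forall>t<h. u t = (\<Sum>r<n. a r * v r t)" using ker by blast
  have "(\<Sum>t<h. w t * u t) = (\<Sum>t<h. w t * (\<Sum>r<n. a r * v r t))"
    using a by (intro sum.cong) auto
  also have "\<dots> = (\<Sum>r<n. a r * (\<Sum>t<h. w t * v r t))"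
    by (simp add: sum_distrib_left sum.swap[of _ "{..<h}"] algebra_simps)
  also have "\<dots> = 0" using orth by simp
  finally have z: "(\<Sum>t<h. w t * u t) = 0" .
  have e1: "(\<Sum>t<h. w t * (if t = k then 1 else 0)) = w k"
    using k by (simp add: if_distrib cong: if_cong)
  have e2: "(\<Sum>t<h. w t * (\<Sum>l<m. X l t * L l k)) = (\<Sum>l<m. (\<Sum>t<h. w t * X l t) * L l k)"
    by (simp add: sum_distrib_left sum_distrib_right sum.swap[of _ "{..<h}"] algebra_simps)
  have "(\<Sum>t<h. w t * u t) = w k - (\<Sum>l<m. (\<Sum>t<h. w t * X l t) * L l k)"
    unfolding u_def by (simp add: right_diff_distrib sum_subtractf e1 e2)
  with z show ?thesis by simp
qed

lemma orth_collapse: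
  fixes v Q :: "nat \<Rightarrow> nat \<Rightarrow> real"
  assumes on: "\<forall>r<n. \<forall>s<n. (\<Sum>k<h. v r k * v s k) = (if r = s then 1 else 0)"
  and r: "r < n"
  shows "(\<Sum>t<h. (\<Sum>r'<n. Q i r' * v r' t) * v r t) = Q i r"
proof -
  have "(\<Sum>t<h. (\<Sum>r'<n. Q i r' * v r' t) * v r t) = (\<Sum>r'<n. Q i r' * (\<Sum>t<h. v r' t * v r t))"
    by (simp add: sum_distrib_left sum_distrib_right sum.swap[of _ "{..<h}"] algebra_simps)
  also have "\<dots> = (\<Sum>r'<n. Q i r' * (if r' = r then 1 else 0))"
    using on r by (intro sum.cong refl) simp
  also have "\<dots> = Q i r" using r by (simp add: if_distrib cong: if_cong)
  finally show ?thesis .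
qed

lemma vbound:
  fixes v :: "nat \<Rightarrow> nat \<Rightarrow> real"
  assumes on: "\<forall>r<n. \<forall>s<n. (\<Sum>k<h. v r k * v s k) = (if r = s then 1 else 0)"
  and "r < n" "k < h"
  shows "\<bar>v r k\<bar> \<le> 1"
proof -
  have "v r k * v r k \<le> (\<Sum>k<h. v r k * v r k)"
    by (rule member_le_sum) (use assms in auto)
  also have "\<dots> = 1" using on assms by simp
  finally have "(v r k)\<^sup>2 \<le> 1" by (simp add: power2_eq_square)
  thus ?thesis by (simp add: abs_square_le_1)
qed

theorem lemma7p2:
  fixes m d h :: nat
  assumes "m + 2 \<le> h" and "h \<le> d"
  shows "\<exists>K1>0. \<exists>K2>0. \<forall>(c::real) (C::real) Xi L v.
           c > 0 \<longrightarrow> C > 0 \<longrightarrow> surj_mat m h L \<longrightarrow> mnorm d h Xi \<le> C \<longrightarrow>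
           dist_Vstar_ge m d h Xi L c \<longrightarrow> orthonormal_kernel_basis m h L v \<longrightarrow>
           mnorm d (h - m) (matmul h Xi (Phi_mat v)) \<le> K1 * C \<and>
           dist_Vdegen_ge (h - m) d (matmul h Xi (Phi_mat v)) (K2 * c)"
proof (rule exI[of _ "real h"], rule conjI)
  show "0 < real h" using assms by simp
  show "\<exists>K2>0. \<forall>(c::real) (C::real) Xi L v.
           c > 0 \<longrightarrow> C > 0 \<longrightarrow> surj_mat m h L \<longrightarrow> mnorm d h Xi \<le> C \<longrightarrow>
           dist_Vstar_ge m d h Xi L c \<longrightarrow> orthonormal_kernel_basis m h L v \<longrightarrow>
           mnorm d (h - m) (matmul h Xi (Phi_mat v)) \<le> real h * C \<and>
           dist_Vdegen_ge (h - m) d (matmul h Xi (Phi_mat v)) (K2 * c)"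
  proof (rule exI[of _ "1 / (real h + 1)"], intro conjI allI impI)
    show "0 < 1 / (real h + 1)" by simp
    fix c C :: real and Xi L v :: "nat \<Rightarrow> nat \<Rightarrow> real"
    assume c: "c > 0" and Cp: "C > 0" and sL: "surj_mat m h L" and XiC: "mnorm d h Xi \<le> C"
      and dV: "dist_Vstar_ge m d h Xi L c" and ob: "orthonormal_kernel_basis m h L v"
    define n where "n = h - m"
    have on: "\<forall>r<n. \<forall>s<n. (\<Sum>k<h. v r k * v s k) = (if r = s then 1 else 0)"
      and ker: "\<forall>x::nat \<Rightarrow> real. (\<forall>i<m. (\<Sum>k<h. L i k * x k) = 0) \<longrightarrow>
        (\<exists>a::nat \<Rightarrow> real. \<forall>k<h. x k = (\<Sum>r<n. a r * v r k))"
      using ob unfolding orthonormal_kernel_basis_def n_def by auto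
    have vb: "\<And>r k. r < n \<Longrightarrow> k < h \<Longrightarrow> \<bar>v r k\<bar> \<le> 1" using vbound[OF on] by blast
    define Psi where "Psi = matmul h Xi (Phi_mat v)"
    have Psi: "Psi i r = (\<Sum>k<h. Xi i k * v r k)" for i r
      unfolding Psi_def matmul_def Phi_mat_def by simp
    show "mnorm d (h - m) (matmul h Xi (Phi_mat v)) \<le> real h * C"
      unfolding Psi_def[symmetric] n_def[symmetric]
    proof (rule mnorm_le)
      show "0 \<le> real h * C" using Cp by simp
      show "\<forall>i<d. \<forall>k<n. \<bar>Psi i k\<bar> \<le> real h * C"
      proof (intro allI impI)
        fix i r assume i: "i < d" and r: "r < n"
        have "\<bar>Psi i r\<bar> \<le> (\<Sum>k<h. \<bar>Xi i k * v r k\<bar>)" unfolding Psi by (rule sum_abs)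
        also have "\<dots> \<le> (\<Sum>k<h. C)"
        proof (rule sum_mono)
          fix k assume "k \<in> {..<h}"
          hence k: "k < h" by simp
          have "\<bar>Xi i k\<bar> \<le> C" using mnorm_ge[OF i k, of Xi] XiC by linarith
          moreover have "\<bar>v r k\<bar> \<le> 1" using vb r k by blast
          ultimately show "\<bar>Xi i k * v r k\<bar> \<le> C"
            using mult_mono[of "\<bar>Xi i k\<bar>" C "\<bar>v r k\<bar>" 1] Cp by (simp add: abs_mult)
        qed
        also have "\<dots> = real h * C" by simp
        finally show "\<bar>Psi i r\<bar> \<le> real h * C" .
      qed
    qed
    show "dist_Vdegen_ge (h - m) d (matmul h Xi (Phi_mat v)) (1 / (real h + 1) * c)"
      unfolding dist_Vdegen_ge_def Psi_def[symmetric] n_def[symmetric]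
    proof (intro allI impI notI)
      fix Q assume Qs: "mnorm d n Q < 1 / (real h + 1) * c"
        and Vd: "V_degen n d (\<lambda>i k. Psi i k + Q i k)"
      obtain i j a where i: "i < d" and j: "j < d" and ij: "i \<noteq> j"
        and eq: "\<forall>k<n. Psi i k + Q i k = a * (Psi j k + Q j k)"
        using V_degen_pair[OF Vd] by blast
      define Q' where "Q' i k = (\<Sum>r<n. Q i r * v r k)" for i k
      have mQ: "mnorm d h Q' \<le> real h * mnorm d n Q"
      proof (rule mnorm_le)
        show "0 \<le> real h * mnorm d n Q" using mnorm_nonneg by simp
        show "\<forall>i<d. \<forall>k<h. \<bar>Q' i k\<bar> \<le> real h * mnorm d n Q"
        proof (intro allI impI)
          fix i k assume i: "i < d" and k: "k < h"
          have "\<bar>Q' i k\<bar> \<le> (\<Sum>r<n. \<bar>Q i r * v r k\<bar>)" unfolding Q'_def by (rule sum_abs)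
          also have "\<dots> \<le> (\<Sum>r<n. mnorm d n Q)"
          proof (rule sum_mono)
            fix r assume "r \<in> {..<n}"
            hence r: "r < n" by simp
            have "\<bar>Q i r\<bar> \<le> mnorm d n Q" using mnorm_ge[OF i r] by blast
            moreover have "\<bar>v r k\<bar> \<le> 1" using vb r k by blast
            ultimately show "\<bar>Q i r * v r k\<bar> \<le> mnorm d n Q"
              using mult_mono[of "\<bar>Q i r\<bar>" "mnorm d n Q" "\<bar>v r k\<bar>" 1] mnorm_nonneg[of d n Q]
              by (simp add: abs_mult)
          qed
          also have "\<dots> = real n * mnorm d n Q" by simp
          also have "\<dots> \<le> real h * mnorm d n Q"
            using mnorm_nonneg[of d n Q] by (intro mult_right_mono) (auto simp: n_def)
          finally show "\<bar>Q' i k\<bar> \<le> real h * mnorm d n Q" .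
        qed
      qed
      have "real h * mnorm d n Q \<le> real h * (1 / (real h + 1) * c)"
        using Qs by (intro mult_left_mono) auto
      also have "\<dots> < c" using c by (simp add: field_simps)
      finally have Q'small: "mnorm d h Q' < c" using mQ by linarith
      define w where "w t = (Xi i t + Q' i t) - a * (Xi j t + Q' j t)" for t
      have rowsum: "(\<Sum>t<h. (Xi i' t + Q' i' t) * v r t) = Psi i' r + Q i' r" if r: "r < n" for i' r
      proof -
        have "(\<Sum>t<h. (Xi i' t + Q' i' t) * v r t) = (\<Sum>t<h. Xi i' t * v r t) + (\<Sum>t<h. Q' i' t * v r t)"
          by (simp add: distrib_right sum.distrib)
        also have "(\<Sum>t<h. Q' i' t * v r t) = Q i' r"
          unfolding Q'_def by (rule orth_collapse[OF on r])
        finally show ?thesis by (simp add: Psi)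
      qed
      have orth: "\<forall>r<n. (\<Sum>t<h. w t * v r t) = 0"
      proof (intro allI impI)
        fix r assume r: "r < n"
        have "(\<Sum>t<h. w t * v r t) = (\<Sum>t<h. (Xi i t + Q' i t) * v r t) - a * (\<Sum>t<h. (Xi j t + Q' j t) * v r t)"
          unfolding w_def by (simp add: left_diff_distrib sum_subtractf sum_distrib_left mult.assoc)
        also have "\<dots> = 0" using rowsum[OF r, of i] rowsum[OF r, of j] eq r by simp
        finally show "(\<Sum>t<h. w t * v r t) = 0" .
      qed
      have ex: "\<exists>x. \<forall>i<m. (\<Sum>k<h. L i k * x k) = (if i = l then 1 else 0)" for l
        using spec[OF sL[unfolded surj_mat_def], of "\<lambda>i. if i = l then 1 else 0"] by simp
      have "\<exists>X. \<forall>l. \<forall>i<m. (\<Sum>k<h. L i k * X l k) = (if i = l then 1 else 0)"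
        using ex by (rule choice[OF allI])
      then obtain X where X: "\<forall>l. \<forall>i<m. (\<Sum>k<h. L i k * X l k) = (if i = l then 1 else 0)"
        by blast
      have rs0: "w k = (\<Sum>l<m. (\<Sum>t<h. w t * X l t) * L l k)" if "k < h" for k
        by (rule rowspace[OF _ ker orth that]) (use X in simp)
      have rs: "\<forall>k<h. w k = (\<Sum>l<m. (\<Sum>t<h. w t * X l t) * L l k)"
        using rs0 by blast
      have t1: "\<exists>t<d. (if t = i then 1 else 0) - a * (if t = j then 1 else 0) \<noteq> (0::real)"
        using i ij by (intro exI[of _ i]) simp
      have p1: "\<exists>\<phi>. \<forall>k<h. Xi i k + Q' i k - a * (Xi j k + Q' j k) = (\<Sum>l<m. \<phi> l * L l k)"
      proof -
        have wk: "Xi i k + Q' i k - a * (Xi j k + Q' j k) = w k" for k by (simp add: w_def)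
        show ?thesis unfolding wk using rs by (intro exI[of _ "\<lambda>l. \<Sum>t<h. w t * X l t"]) blast
      qed
      have "Vstar_degen2 m d h (\<lambda>i k. Xi i k + Q' i k) L"
        unfolding Vstar_degen2_def using i j t1 p1 by blast
      moreover have "\<not> Vstar_degen2 m d h (\<lambda>i k. Xi i k + Q' i k) L"
        using dV Q'small unfolding dist_Vstar_ge_def by blast
      ultimately show False by blast
    qed
  qed
qed

end
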